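(* Let $k\ge 1$ and let $P_{4k}$ be the path with vertices labeled $1,2,\dots,4k$ consecutively along the path. For $v\in\{1,\dots,4k\}$, $$TDV(v)=\begin{cases}0 & \text{if } v\equiv 0,1 \pmod 4,\\ 1 & \text{if } v\equiv 2,3 \pmod 4.\end{cases}$$
   Context: A set $D \subseteq V(G)$ is a total dominating set of a graph $G$ if every vertex of $G$ has a neighbor in $D$. $\gamma_t(G)$ is the minimum cardinality of a total dominating set; a minimum one is a $\gamma_t(G)$-set. $TDV(v)$ is the number of $\gamma_t(P_{4k})$-sets containing $v$. *)

theory Defs
  imports Main
begin

text \<open>A graph is given by a vertex set V and a symmetric adjacency relation E.\<close>

definition total_dominating :: "'a set \<Rightarrow> ('a \<Rightarrow> 'a \<Rightarrow> bool) \<Rightarrow> 'a set \<Rightarrow> bool" where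
  "total_dominating V E D \<longleftrightarrow> D \<subseteq> V \<and> (\<forall>v\<in>V. \<exists>u\<in>D. E v u)"

definition gamma_t :: "'a set \<Rightarrow> ('a \<Rightarrow> 'a \<Rightarrow> bool) \<Rightarrow> nat" where
  "gamma_t V E = (LEAST n. \<exists>D. total_dominating V E D \<and> finite D \<and> card D = n)"

definition gamma_t_sets :: "'a set \<Rightarrow> ('a \<Rightarrow> 'a \<Rightarrow> bool) \<Rightarrow> 'a set set" where
  "gamma_t_sets V E = {D. total_dominating V E D \<and> finite D \<and> card D = gamma_t V E}"

definition path_V :: "nat \<Rightarrow> nat set" where
  "path_V n = {1..n}"

definition path_E :: "nat \<Rightarrow> nat \<Rightarrow> bool" where
  "path_E u v \<longleftrightarrow> u = v + 1 \<or> v = u + 1"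

definition TDV :: "nat \<Rightarrow> nat \<Rightarrow> nat" where
  "TDV k v = card {D \<in> gamma_t_sets (path_V (4*k)) path_E. v \<in> D}"

end

theory Submission
  imports Defs
begin

definition ind :: "nat set \<Rightarrow> nat \<Rightarrow> nat" where
  "ind D j = (if j + 1 \<in> D then 1 else 0)"

lemma ind_le: "ind D j \<le> 1" by (simp add: ind_def)

lemma card_ind: "card (D \<inter> {1..n}) = (\<Sum>j<n. ind D j)"
proof (induction n)
  case 0 then show ?case by simp
next
  case (Suc n)
  show ?case
  proof (cases "Suc n \<in> D")
    case True
    have "D \<inter> {1..Suc n} = insert (Suc n) (D \<inter> {1..n})" using True by auto
    then show ?thesis using Suc True by (simp add: ind_def)
  next
    case False
    have "D \<inter> {1..Suc n} = D \<inter> {1..n}" using False by (auto simp: le_Suc_eq)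
    then show ?thesis using Suc False by (simp add: ind_def)
  qed
qed

lemma st: fixes k :: nat shows "(\<Sum>j<4*Suc k. f j) = (\<Sum>j<4*k. f j) + f (4*k) + f (4*k+1) + f (4*k+2) + f (4*k+3)"
proof -
  have e: "4*Suc k = Suc (Suc (Suc (Suc (4*k))))" by simp
  show ?thesis unfolding e sum.lessThan_Suc by (simp add: eval_nat_numeral)
qed
lemma L1: fixes k :: nat shows "(\<Sum>j<4*k. f j) = (\<Sum>i<k. f (4*i) + f (4*i+1) + f (4*i+2) + f (4*i+3)) "
proof (induction k)
  case 0 then show ?case by simp
next
  case (Suc k)
  show ?case unfolding st sum.lessThan_Suc Suc.IH by (simp only: ac_simps)
qed
lemma L2: fixes m :: nat shows "(\<Sum>j<4*Suc m. f j) = f 0 + f 1 + f (4*m+2) + f (4*m+3)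
   + (\<Sum>i<m. f (4*i+2) + f (4*i+3) + f (4*i+4) + f (4*i+5))"
proof (induction m)
  case 0 then show ?case by (simp add: eval_nat_numeral)
next
  case (Suc m)
  have "(\<Sum>j<4*Suc (Suc m). f j) = (\<Sum>j<4*Suc m. f j) + f (4*m+4) + f(4*m+5) + f(4*m+6) + f(4*m+7)"
    using st[of f "Suc m"] by (simp add: add.commute)
  then show ?case using Suc.IH by (simp add: ac_simps)
qed

lemma sum_ge: "(\<And>i. i < k \<Longrightarrow> c \<le> a i) \<Longrightarrow> c * k \<le> (\<Sum>i<k. a i :: nat)"
proof -
  assume h: "\<And>i. i < k \<Longrightarrow> c \<le> a i"
  have "(\<Sum>i<k. c) \<le> (\<Sum>i<k. a i)" by (rule sum_mono) (use h in auto)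
  then show ?thesis by (simp add: mult.commute)
qed

lemma sum_eq: assumes "\<And>i. i < k \<Longrightarrow> c \<le> a i" "(\<Sum>i<k. a i :: nat) = c * k" "j < k"
  shows "a j = c"
proof (rule ccontr)
  assume "a j \<noteq> c"
  then have "c < a j" using assms(1)[OF assms(3)] by simp
  have "(\<Sum>i<k. c) < (\<Sum>i<k. a i)"
    by (rule sum_strict_mono_ex1) (use assms \<open>c < a j\<close> in auto)
  then show False using assms(2) by (simp add: mult.commute)
qed

definition D0 :: "nat \<Rightarrow> nat set" where
  "D0 k = {v \<in> {1..4*k}. v mod 4 = 2 \<or> v mod 4 = 3}"

lemma dom_step:
  assumes "total_dominating (path_V (4*k)) path_E D" "j < 4*k"
  shows "j + 2 \<in> D \<or> (0 < j \<and> j \<in> D)"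
proof -
  have "Suc j \<in> path_V (4*k)" using assms(2) by (simp add: path_V_def)
  then obtain u where u: "u \<in> D" "path_E (Suc j) u" using assms(1) unfolding total_dominating_def by blast
  have "u \<in> {1..4*k}" using u(1) assms(1) by (auto simp: total_dominating_def path_V_def)
  then show ?thesis using u unfolding path_E_def by auto
qed

lemma ind_one: "a + 1 = b \<Longrightarrow> b \<in> D \<Longrightarrow> ind D a = 1"
  by (simp add: ind_def)

lemma ind_pair:
  assumes "j + 2 \<in> D \<or> (0 < j \<and> j \<in> D)" "a + 1 = j" "a + 2 = c"
  shows "ind D a + ind D c \<ge> 1"
proof -
  have "c + 1 = j + 2" using assms by simp
  then show ?thesis using assms(1,2) unfolding ind_def by auto
qed

lemma lower_and_eq:
  assumes td: "total_dominating (path_V (4*k)) path_E D" and k: "k \<ge> 1"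
  shows "2*k \<le> card D" and "card D = 2*k \<Longrightarrow> D = D0 k"
proof -
  have sub: "D \<subseteq> {1..4*k}" using td by (auto simp: total_dominating_def path_V_def)
  have cardD: "card D = (\<Sum>j<4*k. ind D j)"
    using card_ind[of D "4*k"] sub by (metis inf.absorb1)
  have pa: "ind D (4*i) + ind D (4*i+2) \<ge> 1" if "i < k" for i
    by (rule ind_pair[OF dom_step[OF td, of "4*i+1"]]) (use that in simp_all)
  have pb: "ind D (4*i+1) + ind D (4*i+3) \<ge> 1" if "i < k" for i
    by (rule ind_pair[OF dom_step[OF td, of "4*i+2"]]) (use that in simp_all)
  let ?s = "\<lambda>i. ind D (4*i) + ind D (4*i+1) + ind D (4*i+2) + ind D (4*i+3)"
  have s2: "2 \<le> ?s i" if "i < k" for i using pa[OF that] pb[OF that] by simp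
  have c1: "card D = (\<Sum>i<k. ?s i)" using cardD L1 by simp
  show "2*k \<le> card D" using c1 sum_ge[of k 2 ?s] s2 by simp
  assume eq: "card D = 2*k"
  have s_eq: "?s i = 2" if "i < k" for i
    using sum_eq[of k 2 ?s i] s2 c1 eq that by simp
  have A1: "ind D (4*i) + ind D (4*i+2) = 1" if "i < k" for i
    using s_eq[OF that] pa[OF that] pb[OF that] by simp
  have A2: "ind D (4*i+1) + ind D (4*i+3) = 1" if "i < k" for i
    using s_eq[OF that] pa[OF that] pb[OF that] by simp
  obtain m where m: "k = Suc m" using k by (cases k) auto
  let ?t = "\<lambda>i. ind D (4*i+2) + ind D (4*i+3) + ind D (4*i+4) + ind D (4*i+5)"
  have qa: "ind D (4*i+2) + ind D (4*i+4) \<ge> 1" if "i < m" for i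
    by (rule ind_pair[OF dom_step[OF td, of "4*i+3"]]) (use that m in simp_all)
  have qb: "ind D (4*i+3) + ind D (4*i+5) \<ge> 1" if "i < m" for i
    by (rule ind_pair[OF dom_step[OF td, of "4*i+4"]]) (use that m in simp_all)
  have t2: "2 \<le> ?t i" if "i < m" for i using qa[OF that] qb[OF that] by simp
  have f1: "ind D 1 \<ge> 1" using dom_step[OF td, of 0] m by (auto simp: ind_def)
  have "4*m+3 \<in> D" using dom_step[OF td, of "4*m+3"] m sub by auto
  then have f2: "ind D (4*m+2) \<ge> 1" using ind_one[of "4*m+2" "4*m+3" D] by simp
  have c2: "card D = ind D 0 + ind D 1 + ind D (4*m+2) + ind D (4*m+3) + (\<Sum>i<m. ?t i)"
    using cardD L2[of "ind D" m] m by simp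
  have tsum: "2*m \<le> (\<Sum>i<m. ?t i)" using sum_ge[of m 2 ?t] t2 by simp
  have z0: "ind D 0 = 0" and tsum_eq: "(\<Sum>i<m. ?t i) = 2*m"
    using c2 eq m tsum f1 f2 by simp_all
  have t_eq: "?t i = 2" if "i < m" for i
    using sum_eq[of m 2 ?t i] t2 tsum_eq that by simp
  have B1: "ind D (4*i+2) + ind D (4*i+4) = 1" if "i < m" for i
    using t_eq[OF that] qa[OF that] qb[OF that] by simp
  have B2: "ind D (4*i+3) + ind D (4*i+5) = 1" if "i < m" for i
    using t_eq[OF that] qa[OF that] qb[OF that] by simp
  have P: "ind D (4*i) = 0 \<and> ind D (4*i+1) = 1" if "i < k" for i
    using that
  proof (induction i)
    case 0 then show ?case using z0 f1 ind_le[of D 1] by simp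
  next
    case (Suc i)
    then have IH: "ind D (4*i) = 0" "ind D (4*i+1) = 1" by simp_all
    have i: "i < k" "i < m" using Suc.prems m by simp_all
    have "ind D (4*i+2) = 1" using A1[OF i(1)] IH by simp
    then have "ind D (4*i+4) = 0" using B1[OF i(2)] by simp
    moreover have "ind D (4*i+3) = 0" using A2[OF i(1)] IH by simp
    then have "ind D (4*i+5) = 1" using B2[OF i(2)] by simp
    ultimately show ?case by (simp add: add.commute)
  qed
  have Q: "ind D (4*i+2) = 1 \<and> ind D (4*i+3) = 0" if "i < k" for i
    using P[OF that] A1[OF that] A2[OF that] by simp
  show "D = D0 k"
  proof (rule set_eqI)
    fix v
    show "v \<in> D \<longleftrightarrow> v \<in> D0 k"
    proof (cases "v \<in> {1..4*k}")
      case False then show ?thesis using sub by (auto simp: D0_def)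
    next
      case True
      define i where "i = (v - 1) div 4"
      define r where "r = (v - 1) mod 4"
      have v: "v = Suc (4*i + r)" "r < 4" using True by (auto simp: i_def r_def)
      have ik: "i < k" using True v by simp
      have mem: "v \<in> D \<longleftrightarrow> ind D (4*i+r) = 1" using v by (simp add: ind_def)
      have "r = 0 \<or> r = 1 \<or> r = 2 \<or> r = 3" using v by auto
      then show ?thesis using P[OF ik] Q[OF ik] mem True v unfolding D0_def
        by (auto simp: mod_Suc)
    qed
  qed
qed

lemma D0_mem: "v \<in> D0 k \<longleftrightarrow> 1 \<le> v \<and> v \<le> 4*k \<and> (v mod 4 = 2 \<or> v mod 4 = 3)"
  by (auto simp: D0_def)

lemma m4: "r < 4 \<Longrightarrow> (4*i + r) mod 4 = (r::nat)" by simp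

lemma ind_eq: "j + 1 = w \<Longrightarrow> ind D j = (if w \<in> D then 1 else 0)"
  by (simp add: ind_def)

lemma D0_td: "total_dominating (path_V (4*k)) path_E (D0 k)"
  unfolding total_dominating_def
proof
  show "D0 k \<subseteq> path_V (4*k)" by (auto simp: D0_def path_V_def)
  show "\<forall>v\<in>path_V (4*k). \<exists>u\<in>D0 k. path_E v u"
  proof
    fix v assume "v \<in> path_V (4*k)"
    then have v: "1 \<le> v" "v \<le> 4*k" by (auto simp: path_V_def)
    define q where "q = v div 4"
    have vq: "v = 4*q + v mod 4" unfolding q_def by simp
    have "v mod 4 = 0 \<or> v mod 4 = 1 \<or> v mod 4 = 2 \<or> v mod 4 = 3" by auto
    then show "\<exists>u\<in>D0 k. path_E v u"
    proof (elim disjE)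
      assume h: "v mod 4 = 0"
      then have e: "v = 4*q" using vq by simp
      then have "q \<ge> 1" using v by simp
      then have u: "v - 1 = 4*(q-1) + 3" using e by simp
      have "(v - 1) mod 4 = 3" unfolding u by (rule m4) simp
      then have "v - 1 \<in> D0 k" unfolding D0_mem using u v by simp
      moreover have "path_E v (v - 1)" unfolding path_E_def using v by simp
      ultimately show ?thesis by blast
    next
      assume h: "v mod 4 = 1"
      then have e: "v + 1 = 4*q + 2" using vq by simp
      have "(v + 1) mod 4 = 2" unfolding e by (rule m4) simp
      moreover have "4*q < 4*k" using e v by linarith
      then have "q < k" by simp
      then have "4*q + 4 \<le> 4*k" by simp
      then have "v + 1 \<le> 4*k" using e by linarith
      ultimately have "v + 1 \<in> D0 k" unfolding D0_mem by simp
      moreover have "path_E v (v + 1)" unfolding path_E_def by simp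
      ultimately show ?thesis by blast
    next
      assume h: "v mod 4 = 2"
      then have e: "v + 1 = 4*q + 3" using vq by simp
      have "(v + 1) mod 4 = 3" unfolding e by (rule m4) simp
      moreover have "4*q < 4*k" using e v by linarith
      then have "q < k" by simp
      then have "4*q + 4 \<le> 4*k" by simp
      then have "v + 1 \<le> 4*k" using e by linarith
      ultimately have "v + 1 \<in> D0 k" unfolding D0_mem by simp
      moreover have "path_E v (v + 1)" unfolding path_E_def by simp
      ultimately show ?thesis by blast
    next
      assume h: "v mod 4 = 3"
      then have e: "v - 1 = 4*q + 2" using vq by simp
      have "(v - 1) mod 4 = 2" unfolding e by (rule m4) simp
      then have "v - 1 \<in> D0 k" unfolding D0_mem using e v by simp
      moreover have "path_E v (v - 1)" unfolding path_E_def using v by simp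
      ultimately show ?thesis by blast
    qed
  qed
qed

lemma ind_D0: assumes "i < k"
  shows "ind (D0 k) (4*i) = 0 \<and> ind (D0 k) (4*i+1) = 1 \<and> ind (D0 k) (4*i+2) = 1 \<and> ind (D0 k) (4*i+3) = 0"
proof -
  have a: "(4*i+1) mod 4 = 1" "(4*i+2) mod 4 = 2" "(4*i+3) mod 4 = 3" "(4*i+4) mod 4 = 0"
    using m4[of 1 i] m4[of 2 i] m4[of 3 i] m4[of 0 "i+1"] by simp_all
  have b: "4*i+4 \<le> 4*k" using assms by simp
  have "ind (D0 k) (4*i) = 0" using ind_eq[of "4*i" "4*i+1" "D0 k"] a b by (simp add: D0_mem)
  moreover have "ind (D0 k) (4*i+1) = 1" using ind_eq[of "4*i+1" "4*i+2" "D0 k"] a b by (simp add: D0_mem)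
  moreover have "ind (D0 k) (4*i+2) = 1" using ind_eq[of "4*i+2" "4*i+3" "D0 k"] a b by (simp add: D0_mem)
  moreover have "ind (D0 k) (4*i+3) = 0" using ind_eq[of "4*i+3" "4*i+4" "D0 k"] a b by (simp add: D0_mem)
  ultimately show ?thesis by simp
qed

lemma D0_card: "card (D0 k) = 2*k"
proof -
  have sub: "D0 k \<subseteq> {1..4*k}" by (auto simp: D0_def)
  have "card (D0 k) = (\<Sum>j<4*k. ind (D0 k) j)"
    using card_ind[of "D0 k" "4*k"] sub by (metis inf.absorb1)
  also have "\<dots> = (\<Sum>i<k. ind (D0 k) (4*i) + ind (D0 k) (4*i+1) + ind (D0 k) (4*i+2) + ind (D0 k) (4*i+3))"
    by (rule L1)
  also have "\<dots> = (\<Sum>i<k. 2)"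
  proof (rule sum.cong)
    fix i assume "i \<in> {..<k}"
    then show "ind (D0 k) (4*i) + ind (D0 k) (4*i+1) + ind (D0 k) (4*i+2) + ind (D0 k) (4*i+3) = 2"
      using ind_D0[of i k] by simp
  qed simp
  finally show ?thesis by simp
qed

lemma gamma_sets: assumes "k \<ge> 1" shows "gamma_t_sets (path_V (4*k)) path_E = {D0 k}"
proof -
  have fin: "finite (D0 k)" by (simp add: D0_def)
  have g: "gamma_t (path_V (4*k)) path_E = 2*k"
    unfolding gamma_t_def
  proof (rule Least_equality)
    show "\<exists>D. total_dominating (path_V (4 * k)) path_E D \<and> finite D \<and> card D = 2 * k"
      using D0_td D0_card fin by blast
  next
    fix y assume "\<exists>D. total_dominating (path_V (4 * k)) path_E D \<and> finite D \<and> card D = y"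
    then show "2*k \<le> y" using lower_and_eq(1)[OF _ assms] by blast
  qed
  show ?thesis unfolding gamma_t_sets_def g
    using D0_td D0_card fin lower_and_eq(2)[OF _ assms] by blast
qed

theorem corollary5p2:
  fixes k v :: nat
  assumes "k \<ge> 1" and "v \<in> {1..4*k}"
  shows "TDV k v = (if v mod 4 = 0 \<or> v mod 4 = 1 then 0 else 1)"
proof -
  have "TDV k v = card {D \<in> {D0 k}. v \<in> D}" unfolding TDV_def gamma_sets[OF assms(1)] ..
  also have "\<dots> = (if v \<in> D0 k then 1 else 0)"
  proof (cases "v \<in> D0 k")
    case True
    then have "{D \<in> {D0 k}. v \<in> D} = {D0 k}" by auto
    then show ?thesis using True by simp
  qed auto
  finally show ?thesis using assms(2) unfolding D0_def by auto
qed

end
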